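(* For every fixed integer $k\ge 2$ and every fixed $\epsilon>0$ there is a polynomial-time algorithm that, given any normalized $k$-ary string $s$ (say fully $k'$-ary for some $k'\le k$), computes a sequence of flips transforming $s$ into a string of length $k'$ using at most $(1+\epsilon)\,d_{\rm g}(s)$ flips.
   Context: Strings are finite words over $\{0,1,2,\dots\}$; a $k$-ary string uses only symbols from $\{0,\dots,k-1\}$. A string is \emph{normalized} if no two adjacent symbols are equal; the \emph{normalization} of a string replaces every maximal run of identical symbols by a single copy. A string is \emph{fully $k$-ary} if the set of symbols occurring in it is exactly $\{0,\dots,k-1\}$. For a normalized string $s=s_1\cdots s_n$ and $1\le i\le n$, the flip $f^{(i)}(s)$ is the normalization of $s_i\cdots s_1 s_{i+1}\cdots s_n$. The grouping distance $d_{\rm g}(s)$ of a normalized fully $k'$-ary string is the minimum number of flips needed to transform $s$ into a string of length $k'$. *)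

theory Defs
  imports Complex_Main
begin

definition normalized :: "nat list \<Rightarrow> bool" where
  "normalized s \<longleftrightarrow> (\<forall>i. Suc i < length s \<longrightarrow> s ! i \<noteq> s ! Suc i)"

definition normalize :: "nat list \<Rightarrow> nat list" where
  "normalize s = remdups_adj s"

definition fully_kary :: "nat \<Rightarrow> nat list \<Rightarrow> bool" where
  "fully_kary k s \<longleftrightarrow> set s = {0..<k}"

text \<open>Flip with 1-based index i: reverse the prefix of length i, then normalize.\<close>
definition flip :: "nat \<Rightarrow> nat list \<Rightarrow> nat list" where
  "flip i s = normalize (rev (take i s) @ drop i s)"

fun flips :: "nat list \<Rightarrow> nat list \<Rightarrow> nat list option" where
  "flips [] s = Some s"
| "flips (i # is) s = (if 1 \<le> i \<and> i \<le> length s then flips is (flip i s) else None)"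

definition dg :: "nat list \<Rightarrow> nat" where
  "dg s = (LEAST m. \<exists>is t. length is = m \<and> flips is s = Some t \<and> length t = card (set s))"

datatype dir = Lft | Rgt | Stay

record tm =
  states :: "nat set"
  symbols :: "nat set"
  trans :: "nat \<Rightarrow> nat \<Rightarrow> (nat \<times> nat \<times> dir) option"
  start :: nat

text \<open>Symbol 0 is the blank. The machine halts when the transition is undefined.\<close>
definition wf_tm :: "tm \<Rightarrow> bool" where
  "wf_tm M \<longleftrightarrow> finite (states M) \<and> finite (symbols M) \<and> 0 \<in> symbols M \<and>
     start M \<in> states M \<and>
     (\<forall>q a. (q \<notin> states M \<or> a \<notin> symbols M) \<longrightarrow> trans M q a = None) \<and>
     (\<forall>q a q' b d. trans M q a = Some (q', b, d) \<longrightarrow> q' \<in> states M \<and> b \<in> symbols M)"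

text \<open>Configuration: (state, cells left of head in reverse order, cells from head rightwards).\<close>
type_synonym config = "nat \<times> nat list \<times> nat list"

definition head_sym :: "nat list \<Rightarrow> nat" where
  "head_sym rs = (case rs of [] \<Rightarrow> 0 | x # _ \<Rightarrow> x)"

definition step :: "tm \<Rightarrow> config \<Rightarrow> config" where
  "step M c = (case c of (q, ls, rs) \<Rightarrow>
     (case trans M q (head_sym rs) of
        None \<Rightarrow> c
      | Some (q', b, d) \<Rightarrow>
          (case d of
             Stay \<Rightarrow> (q', ls, b # tl rs)
           | Rgt \<Rightarrow> (q', b # ls, tl rs)
           | Lft \<Rightarrow> (case ls of [] \<Rightarrow> (q', [], b # tl rs)
                              | l # ls' \<Rightarrow> (q', ls', l # b # tl rs)))))"

definition halted :: "tm \<Rightarrow> config \<Rightarrow> bool" where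
  "halted M c = (case c of (q, ls, rs) \<Rightarrow> trans M q (head_sym rs) = None)"

definition init :: "tm \<Rightarrow> nat list \<Rightarrow> config" where
  "init M x = (start M, [], x)"

definition tape_output :: "config \<Rightarrow> nat list" where
  "tape_output c = (case c of (q, ls, rs) \<Rightarrow> takeWhile (\<lambda>a. a \<noteq> 0) rs)"

definition runs_within :: "tm \<Rightarrow> nat list \<Rightarrow> nat \<Rightarrow> nat list \<Rightarrow> bool" where
  "runs_within M x t y \<longleftrightarrow>
     (\<exists>n\<le>t. halted M ((step M ^^ n) (init M x)) \<and> tape_output ((step M ^^ n) (init M x)) = y)"

definition enc_string :: "nat list \<Rightarrow> nat list" where
  "enc_string s = map Suc s"

definition enc_flips :: "nat list \<Rightarrow> nat list" where
  "enc_flips is = concat (map (\<lambda>i. replicate i 1 @ [2]) is)"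

end

theory Submission
  imports Defs "HOL-Library.Countable"
begin

lemma normalized_iff: "normalized s = distinct_adj s"
  by (simp add: normalized_def distinct_adj_conv_nth)

lemma flips_append: "flips (a @ b) s = (case flips a s of None \<Rightarrow> None | Some t \<Rightarrow> flips b t)"
  by (induction a arbitrary: s) auto

lemma remdups_adj_app:
  assumes "distinct_adj xs" "distinct_adj ys"
  shows "remdups_adj (xs @ ys) = (if xs \<noteq> [] \<and> ys \<noteq> [] \<and> last xs = hd ys then xs @ tl ys else xs @ ys)"
proof (cases "xs \<noteq> [] \<and> ys \<noteq> [] \<and> last xs = hd ys")
  case True
  then obtain xs' y ys' where xs: "xs = xs' @ [y]" and ys: "ys = y # ys'"
    by (metis append_butlast_last_id list.collapse)
  have "remdups_adj (xs @ ys) = remdups_adj (xs' @ [y]) @ tl (remdups_adj (y # y # ys'))"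
    unfolding xs ys using remdups_adj_append[of xs' y "y # ys'"] by simp
  also have "\<dots> = xs @ tl (remdups_adj (y # ys'))"
  proof -
    have "remdups_adj (xs' @ [y]) = xs' @ [y]" using assms(1) xs distinct_adj_altdef by auto
    then show ?thesis using xs by simp
  qed
  also have "remdups_adj (y # ys') = y # ys'" using assms(2) ys distinct_adj_altdef by auto
  finally show ?thesis using True ys by simp
next
  case False
  then have "distinct_adj (xs @ ys)" using assms distinct_adj_append_iff by blast
  then show ?thesis using False distinct_adj_altdef by auto
qed

lemma len_app: "distinct_adj xs \<Longrightarrow> distinct_adj ys \<Longrightarrow>
   length xs + length ys \<le> Suc (length (remdups_adj (xs @ ys)))"
  by (simp add: remdups_adj_app)

lemma distinct_adj_take: "distinct_adj s \<Longrightarrow> distinct_adj (take i s)"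
  by (metis append_take_drop_id distinct_adj_appendD1)
lemma distinct_adj_drop: "distinct_adj s \<Longrightarrow> distinct_adj (drop i s)"
  by (metis append_take_drop_id distinct_adj_appendD2)

lemma flip_props:
  assumes "distinct_adj s"
  shows "distinct_adj (flip i s) \<and> set (flip i s) = set s \<and> length s \<le> Suc (length (flip i s))"
proof -
  let ?xs = "rev (take i s)" and ?ys = "drop i s"
  have d: "distinct_adj ?xs" "distinct_adj ?ys" using assms distinct_adj_take distinct_adj_drop by auto
  have "set (?xs @ ?ys) = set s"
    by (metis append_take_drop_id set_append set_rev)
  moreover have "length s \<le> Suc (length (remdups_adj (?xs @ ?ys)))"
    using len_app[OF d] by simp
  ultimately show ?thesis by (simp add: flip_def normalize_def)
qed

lemma flips_props:
  "flips fs s = Some t \<Longrightarrow> distinct_adj s \<Longrightarrow>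
     distinct_adj t \<and> set t = set s \<and> length s \<le> length t + length fs"
proof (induction fs arbitrary: s)
  case Nil then show ?case by simp
next
  case (Cons i fs)
  then have f: "flips fs (flip i s) = Some t" by (auto split: if_splits)
  from flip_props[OF Cons.prems(2), of i] Cons.IH[OF f] show ?case by auto
qed

fun idx :: "nat \<Rightarrow> nat list \<Rightarrow> nat" where
  "idx a [] = 0"
| "idx a (x # xs) = (if x = a then 0 else Suc (idx a xs))"

lemma idx_props: "a \<in> set xs \<Longrightarrow> idx a xs < length xs \<and> xs ! idx a xs = a"
  by (induction xs) auto

function runG :: "nat list \<Rightarrow> nat list \<Rightarrow> nat list \<times> nat list" where
  "runG [] T = ([], T)"
| "runG (a # W) T = (if a \<in> set W
      then apfst ((#) (Suc (idx a W))) (runG (rev (take (idx a W) W) @ a # drop (Suc (idx a W)) W) T)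
      else apfst ((#) (Suc (length W))) (runG (rev W) (remdups_adj (a # T))))"
  by pat_completeness auto
termination
  by (relation "measure (\<lambda>(W,T). length W)") (auto dest: idx_props)

lemma runG_len: "length (fst (runG W T)) = length W"
  by (induction W T rule: runG.induct) (auto dest: idx_props)

lemma runG_set: "set (snd (runG W T)) = set W \<union> set T"
proof (induction W T rule: runG.induct)
  case (2 a W T)
  show ?case
  proof (cases "a \<in> set W")
    case True
    have "set (rev (take (idx a W) W) @ a # drop (Suc (idx a W)) W) = set (a # W)"
    proof -
      have "W = take (idx a W) W @ a # drop (Suc (idx a W)) W"
        using idx_props[OF True] by (metis id_take_nth_drop)
      then have "set W = set (take (idx a W) W) \<union> {a} \<union> set (drop (Suc (idx a W)) W)"
        by (metis Un_insert_right insert_is_Un list.simps(15) set_append sup_assoc sup_commute)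
      then show ?thesis by auto
    qed
    then show ?thesis using 2 True by simp
  next
    case False
    then show ?thesis using 2 by auto
  qed
qed simp

lemma runG_lenT: "length (snd (runG W T)) \<le> length T + card (set W)"
proof (induction W T rule: runG.induct)
  case (2 a W T)
  show ?case
  proof (cases "a \<in> set W")
    case True
    have "set (rev (take (idx a W) W) @ a # drop (Suc (idx a W)) W) = set (a # W)"
    proof -
      have "W = take (idx a W) W @ a # drop (Suc (idx a W)) W"
        using idx_props[OF True] by (metis id_take_nth_drop)
      then have "set W = set (take (idx a W) W) \<union> {a} \<union> set (drop (Suc (idx a W)) W)"
        by (metis Un_insert_right insert_is_Un list.simps(15) set_append sup_assoc sup_commute)
      then show ?thesis by auto
    qed
    then show ?thesis using 2 True by simp
  next
    case False
    have "length (remdups_adj (a # T)) \<le> Suc (length T)" using remdups_adj_length[of "a # T"] by simp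
    moreover have "card (set (a # W)) = Suc (card (set W))" using False by simp
    ultimately show ?thesis using 2 False by simp
  qed
qed simp

lemma runG_distinct: "distinct T \<Longrightarrow> set T \<inter> set W = {} \<Longrightarrow> distinct (snd (runG W T))"
proof (induction W T rule: runG.induct)
  case (2 a W T)
  show ?case
  proof (cases "a \<in> set W")
    case True
    have "set (rev (take (idx a W) W) @ a # drop (Suc (idx a W)) W) = set (a # W)"
    proof -
      have "W = take (idx a W) W @ a # drop (Suc (idx a W)) W"
        using idx_props[OF True] by (metis id_take_nth_drop)
      then have "set W = set (take (idx a W) W) \<union> {a} \<union> set (drop (Suc (idx a W)) W)"
        by (metis Un_insert_right insert_is_Un list.simps(15) set_append sup_assoc sup_commute)
      then show ?thesis by auto
    qed
    then show ?thesis using 2 True by simp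
  next
    case False
    have "remdups_adj (a # T) = a # T" using 2(3,4) by (intro remdups_adj_distinct) auto
    then show ?thesis using 2 False by auto
  qed
qed simp

lemma remdups_adj_cons_app: "distinct_adj (T @ r) \<Longrightarrow> T \<noteq> [] \<Longrightarrow>
   remdups_adj (a # T @ r) = remdups_adj (a # T) @ r"
proof -
  assume d: "distinct_adj (T @ r)" and ne: "T \<noteq> []"
  then obtain t T' where T: "T = t # T'" by (cases T) auto
  have dT: "distinct_adj T" using d by blast
  have e1: "remdups_adj (T @ r) = T @ r" using d distinct_adj_altdef by blast
  have e2: "remdups_adj T = T" using dT distinct_adj_altdef by blast
  show ?thesis
  proof (cases "a = t")
    case True
    then show ?thesis using e1 e2 T by simp
  next
    case False
    then show ?thesis using e1 e2 T by simp
  qed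
qed

lemma runG_flips:
  "distinct_adj (W @ T @ r) \<Longrightarrow> T \<noteq> [] \<or> r = [] \<Longrightarrow>
     flips (fst (runG W T)) (W @ T @ r) = Some (snd (runG W T) @ r)"
proof (induction W T rule: runG.induct)
  case (1 T)
  then show ?case by simp
next
  case (2 a W T)
  note IH1 = 2(1) and IH2 = 2(2) and D = 2(3) and C = 2(4)
  show ?case
  proof (cases "a \<in> set W")
    case True
    define p where "p = idx a W"
    have pl: "p < length W" and pa: "W ! p = a" using idx_props[OF True] p_def by auto
    let ?W2 = "rev (take p W) @ a # drop (Suc p) W"
    have Wsplit: "W = take p W @ a # drop (Suc p) W" using pl pa by (metis id_take_nth_drop)
    have fl: "flip (Suc p) (a # W @ T @ r) = ?W2 @ T @ r"
    proof -
      have tk: "take (Suc p) (a # W @ T @ r) = a # take p W" using pl by simp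
      have dr: "drop (Suc p) (a # W @ T @ r) = a # drop (Suc p) W @ T @ r"
      proof -
        have "drop (Suc p) (a # W @ T @ r) = drop p W @ T @ r" using pl by simp
        also have "drop p W = a # drop (Suc p) W" using Cons_nth_drop_Suc[OF pl] pa by simp
        finally show ?thesis by simp
      qed
      have d1: "distinct_adj (rev (take p W) @ [a])"
      proof -
        have "distinct_adj (take (Suc p) (a # W @ T @ r))" using D distinct_adj_take by (metis append_Cons)
        then have "distinct_adj (a # take p W)" by (simp only: tk)
        then have "distinct_adj (rev (a # take p W))" by (simp only: distinct_adj_rev)
        then show ?thesis by simp
      qed
      have d2: "distinct_adj (a # drop (Suc p) W @ T @ r)"
        using distinct_adj_drop[of "a # W @ T @ r" "Suc p"] D dr by simp
      have "flip (Suc p) (a # W @ T @ r) = remdups_adj ((rev (take p W) @ [a]) @ (a # drop (Suc p) W @ T @ r))"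
        unfolding flip_def normalize_def tk dr by simp
      also have "\<dots> = (rev (take p W) @ [a]) @ drop (Suc p) W @ T @ r"
        using remdups_adj_app[OF d1 d2] by simp
      finally show ?thesis by simp
    qed
    have d3: "distinct_adj (?W2 @ T @ r)"
      using fl distinct_adj_remdups_adj unfolding flip_def normalize_def by metis
    have IH: "flips (fst (runG ?W2 T)) (?W2 @ T @ r) = Some (snd (runG ?W2 T) @ r)"
      using IH1[OF True] d3 C p_def by simp
    have "1 \<le> Suc p \<and> Suc p \<le> length (a # W @ T @ r)" using pl by simp
    then show ?thesis using True IH fl p_def by simp
  next
    case False
    have fl: "flip (Suc (length W)) (a # W @ T @ r) = rev W @ remdups_adj (a # T) @ r"
    proof -
      have "flip (Suc (length W)) (a # W @ T @ r) = remdups_adj (rev W @ a # T @ r)"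
        unfolding flip_def normalize_def by simp
      also have "\<dots> = remdups_adj (rev W @ [a]) @ tl (remdups_adj (a # T @ r))"
        by (rule remdups_adj_append)
      also have "remdups_adj (rev W @ [a]) = rev W @ [a]"
      proof -
        have "distinct_adj (a # W)" using D by blast
        then have "distinct_adj (rev (a # W))" by (simp only: distinct_adj_rev)
        then have "distinct_adj (rev W @ [a])" by simp
        then show ?thesis using distinct_adj_altdef by blast
      qed
      also have "(rev W @ [a]) @ tl (remdups_adj (a # T @ r)) = rev W @ remdups_adj (a # T @ r)"
        using remdups_adj_Cons_alt[of a "T @ r"] by simp
      also have "remdups_adj (a # T @ r) = remdups_adj (a # T) @ r"
      proof (cases "T = []")
        case True then show ?thesis using C by simp
      next
        case F: False
        have "distinct_adj (T @ r)" using D distinct_adj_appendD2[of "a # W" "T @ r"] by simp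
        then show ?thesis by (rule remdups_adj_cons_app[OF _ F])
      qed
      finally show ?thesis by simp
    qed
    have d3: "distinct_adj (rev W @ remdups_adj (a # T) @ r)"
      using fl distinct_adj_remdups_adj unfolding flip_def normalize_def by metis
    have IH: "flips (fst (runG (rev W) (remdups_adj (a # T)))) (rev W @ remdups_adj (a # T) @ r)
        = Some (snd (runG (rev W) (remdups_adj (a # T))) @ r)"
      using IH2[OF False] d3 by simp
    then show ?thesis using False fl by simp
  qed
qed

lemma F_exists:
  assumes "distinct_adj X"
  shows "flips (fst (runG X [])) X = Some (snd (runG X [])) \<and>
         length (snd (runG X [])) = card (set X) \<and> length (fst (runG X [])) = length X"
proof -
  have f: "flips (fst (runG X [])) (X @ [] @ []) = Some (snd (runG X []) @ [])"
    using runG_flips[of X "[]" "[]"] assms by simp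
  have "distinct (snd (runG X []))" using runG_distinct[of "[]" X] by simp
  moreover have "set (snd (runG X [])) = set X" using runG_set[of X "[]"] by simp
  ultimately have "length (snd (runG X [])) = card (set X)" by (metis distinct_card)
  then show ?thesis using f runG_len by simp
qed

definition goodseq :: "nat list \<Rightarrow> nat list \<Rightarrow> bool" where
  "goodseq X fs \<longleftrightarrow> (\<exists>u. flips fs X = Some u \<and> length u = card (set X))"

lemma dg_alt: "dg X = (LEAST m. \<exists>fs. length fs = m \<and> goodseq X fs)"
  unfolding dg_def goodseq_def by (intro arg_cong[where f=Least] ext) auto

lemma dg_ex: "distinct_adj X \<Longrightarrow> \<exists>m fs. length fs = m \<and> goodseq X fs"
  using F_exists unfolding goodseq_def by blast

lemma dg_le: "distinct_adj X \<Longrightarrow> dg X \<le> length X"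
  unfolding dg_alt using F_exists[of X] unfolding goodseq_def
  by (intro Least_le) blast

lemma dg_attained: "distinct_adj X \<Longrightarrow> \<exists>fs. length fs = dg X \<and> goodseq X fs"
  unfolding dg_alt using dg_ex[of X] by (rule LeastI_ex)

lemma dg_ge: "distinct_adj X \<Longrightarrow> length X \<le> dg X + card (set X)"
proof -
  assume d: "distinct_adj X"
  obtain fs u where "length fs = dg X" "flips fs X = Some u" "length u = card (set X)"
    using dg_attained[OF d] unfolding goodseq_def by blast
  then show ?thesis using flips_props[of fs X u] d by simp
qed

definition opt :: "nat list \<Rightarrow> nat list" where
  "opt X = (SOME fs. length fs = dg X \<and> goodseq X fs)"

lemma opt_props: "distinct_adj X \<Longrightarrow> length (opt X) = dg X \<and> goodseq X (opt X)"
  unfolding opt_def using dg_attained by (rule someI_ex)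

definition dlK :: "nat \<Rightarrow> nat list \<Rightarrow> nat \<Rightarrow> nat list" where
  "dlK K X c = (if length X < K then X @ [c] else snd (runG X [c]))"
definition flK :: "nat \<Rightarrow> nat list \<Rightarrow> nat \<Rightarrow> nat list" where
  "flK K X c = (if length X < K then [] else fst (runG X [c]))"

fun trun :: "nat \<Rightarrow> nat list \<Rightarrow> nat list \<Rightarrow> nat list \<times> nat list" where
  "trun K X [] = ([], X)"
| "trun K X (c # r) = apfst ((@) (flK K X c)) (trun K (dlK K X c) r)"

lemma trun_flips: "distinct_adj (X @ r) \<Longrightarrow>
   flips (fst (trun K X r)) (X @ r) = Some (snd (trun K X r))"
proof (induction r arbitrary: X)
  case Nil then show ?case by simp
next
  case (Cons c r)
  show ?case
  proof (cases "length X < K")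
    case True
    then show ?thesis using Cons.IH[of "X @ [c]"] Cons.prems by (simp add: dlK_def flK_def)
  next
    case False
    have f: "flips (fst (runG X [c])) (X @ [c] @ r) = Some (snd (runG X [c]) @ r)"
      using runG_flips[of X "[c]" r] Cons.prems by simp
    then have "distinct_adj (snd (runG X [c]) @ r)" using flips_props Cons.prems by fastforce
    then have "flips (fst (trun K (snd (runG X [c])) r)) (snd (runG X [c]) @ r) =
        Some (snd (trun K (snd (runG X [c])) r))" using Cons.IH by blast
    then show ?thesis using False f by (simp add: dlK_def flK_def flips_append)
  qed
qed

lemma trun_set: "set (snd (trun K X r)) = set X \<union> set r"
proof (induction r arbitrary: X)
  case Nil then show ?case by simp
next
  case (Cons c r)
  then show ?case using runG_set[of X "[c]"] by (auto simp: dlK_def)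
qed

lemma trun_small: "length X + length r \<le> K \<Longrightarrow> trun K X r = ([], X @ r)"
  by (induction r arbitrary: X) (auto simp: dlK_def flK_def)

lemma trun_count:
  assumes "length X \<le> K" "card (set X \<union> set r) \<le> k" "k < K"
  shows "(K - k) * (length (fst (trun K X r)) + length (snd (trun K X r))) + k * length (snd (trun K X r))
          \<le> K * (length X + length r)"
  using assms
proof (induction r arbitrary: X)
  case Nil
  have "(K - k) * length X + k * length X = K * length X"
    using less_imp_le[OF Nil.prems(3)] by (metis add_mult_distrib le_add_diff_inverse2)
  then show ?case by simp
next
  case (Cons c r)
  let ?X' = "dlK K X c" and ?fl = "flK K X c"
  let ?F = "fst (trun K ?X' r)" and ?Xf = "snd (trun K ?X' r)"
  have step: "(K - k) * length ?fl + K * length ?X' \<le> K * (length X + 1)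
     \<and> length ?X' \<le> K \<and> set ?X' \<union> set r = set X \<union> set (c # r)"
  proof (cases "length X < K")
    case True
    then show ?thesis by (simp add: dlK_def flK_def)
  next
    case False
    then have lX: "length X = K" using Cons.prems(1) by simp
    have l1: "length (snd (runG X [c])) \<le> 1 + card (set X)" using runG_lenT[of X "[c]"] by simp
    have "card (set X) \<le> card (set X \<union> set (c # r))" by (rule card_mono) auto
    then have "card (set X) \<le> k" using Cons.prems(2) by linarith
    then have l2: "length (snd (runG X [c])) \<le> 1 + k" using l1 by simp
    have "(K - k) * K + K * length (snd (runG X [c])) \<le> (K - k) * K + K * (1 + k)"
      using mult_le_mono2[OF l2, of K] by simp
    also have "\<dots> = K * (K + 1)"
    proof -
      have "(K - k) * K + K * (1 + k) = ((K - k) + k) * K + K" by (simp add: algebra_simps)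
      also have "\<dots> = K * K + K" using Cons.prems(3) by simp
      finally show ?thesis by (simp add: algebra_simps)
    qed
    finally have A: "(K - k) * K + K * length (snd (runG X [c])) \<le> K * (K + 1)" .
    have "set (snd (runG X [c])) = set X \<union> {c}" using runG_set[of X "[c]"] by simp
    then show ?thesis using A lX l2 Cons.prems(3) False
      by (auto simp: dlK_def flK_def runG_len)
  qed
  have IH: "(K - k) * (length ?F + length ?Xf) + k * length ?Xf \<le> K * (length ?X' + length r)"
    using Cons.IH[of ?X'] step Cons.prems by simp
  have "(K - k) * (length (fst (trun K X (c # r))) + length (snd (trun K X (c # r))))
         + k * length (snd (trun K X (c # r)))
      = (K - k) * length ?fl + ((K - k) * (length ?F + length ?Xf) + k * length ?Xf)"
    by (simp add: algebra_simps)
  also have "\<dots> \<le> (K - k) * length ?fl + K * (length ?X' + length r)" using IH by simp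
  also have "\<dots> \<le> K * (length X + 1) + K * length r" using step by (simp add: algebra_simps)
  finally show ?case by (simp add: algebra_simps)
qed

datatype st = Rd "nat list" | GoR "nat list" "nat list" | Out "nat list option" "nat list"
  | Bk "nat list" | FinBk | Hlt

instance st :: countable by countable_datatype

definition blank :: "nat list \<Rightarrow> bool" where
  "blank zs \<longleftrightarrow> (\<forall>x\<in>set zs. x = 0)"

lemma blank_hd: "blank zs \<Longrightarrow> head_sym zs = 0"
  by (cases zs) (auto simp: blank_def head_sym_def)
lemma blank_tl: "blank zs \<Longrightarrow> blank (tl zs)"
  by (cases zs) (auto simp: blank_def)

locale tmloc =
  fixes k :: nat and Xs :: "nat list set" and dl :: "nat list \<Rightarrow> nat \<Rightarrow> nat list"
    and lam :: "nat list \<Rightarrow> nat \<Rightarrow> nat list" and phi :: "nat list \<Rightarrow> nat list"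
  assumes k2: "2 \<le> k" and finXs: "finite Xs" and nilXs: "[] \<in> Xs"
    and dlXs: "\<And>X c. X \<in> Xs \<Longrightarrow> c < k \<Longrightarrow> dl X c \<in> Xs"
    and lam12: "\<And>X c. set (lam X c) \<subseteq> {1,2}" and phi12: "\<And>X. set (phi X) \<subseteq> {1,2}"
begin

definition Sig :: "nat set" where "Sig = {0..Suc (Suc k)}"

fun dT :: "st \<Rightarrow> nat \<Rightarrow> (st \<times> nat \<times> dir) option" where
  "dT (Rd X) a = (if 1 \<le> a \<and> a \<le> k then Some (GoR (dl X (a - 1)) (lam X (a - 1)), Suc k, Rgt)
      else if a = 0 \<or> a = Suc (Suc k) then Some (Out None (phi X), Suc (Suc k), Rgt) else None)"
| "dT (GoR X ch) a = (if 1 \<le> a \<and> a \<le> k then Some (GoR X ch, a, Rgt)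
      else if a = 0 \<or> a = Suc (Suc k) then Some (Out (Some X) ch, Suc (Suc k), Rgt) else None)"
| "dT (Out nx ch) a = (if a = 1 \<or> a = 2 then Some (Out nx ch, a, Rgt)
      else if a = 0 then (case ch of y # ys \<Rightarrow> Some (Out nx ys, y, Rgt)
                          | [] \<Rightarrow> Some (case nx of None \<Rightarrow> FinBk | Some X \<Rightarrow> Bk X, 0, Stay))
      else None)"
| "dT (Bk X) a = (if a = Suc k then Some (Rd X, a, Rgt) else Some (Bk X, a, Lft))"
| "dT FinBk a = (if a = Suc (Suc k) then Some (Hlt, a, Rgt) else Some (FinBk, a, Lft))"
| "dT Hlt a = None"

definition CH :: "nat list set" where
  "CH = (\<lambda>(X, c). lam X c) ` (Xs \<times> {..<k}) \<union> phi ` Xs"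
definition CHS :: "nat list set" where
  "CHS = (\<Union>ch\<in>CH. (\<lambda>i. drop i ch) ` {..length ch})"
definition S :: "st set" where
  "S = Rd ` Xs \<union> Bk ` Xs \<union> (\<lambda>(X, ch). GoR X ch) ` (Xs \<times> CH)
     \<union> (\<lambda>(X, ys). Out (Some X) ys) ` (Xs \<times> CHS) \<union> Out None ` CHS \<union> {FinBk, Hlt}"

definition M :: tm where
  "M = (| states = to_nat ` S, symbols = Sig,
          trans = (\<lambda>q a. if q \<in> to_nat ` S \<and> a \<in> Sig
                          then map_option (\<lambda>(q', b, d). (to_nat q', b, d)) (dT (from_nat q) a) else None),
          start = to_nat (Rd []) |)"

lemma finCH: "finite CH" unfolding CH_def using finXs by auto
lemma finCHS: "finite CHS" unfolding CHS_def using finCH by auto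
lemma finS: "finite S" unfolding S_def using finXs finCH finCHS by auto

lemma CH_CHS: "ch \<in> CH \<Longrightarrow> ch \<in> CHS"
  unfolding CHS_def by (auto intro!: bexI[where x=ch] image_eqI[where x=0])

lemma CHS_tl: "y # ys \<in> CHS \<Longrightarrow> ys \<in> CHS"
proof -
  assume "y # ys \<in> CHS"
  then obtain ch i where ch: "ch \<in> CH" "i \<le> length ch" "drop i ch = y # ys" unfolding CHS_def by auto
  then have "drop (Suc i) ch = ys" by (metis drop_Suc list.sel(3) tl_drop)
  moreover have "Suc i \<le> length ch" using ch by (metis Suc_leI length_drop list.simps(3) zero_less_diff
        length_greater_0_conv)
  ultimately show ?thesis unfolding CHS_def using ch(1) by auto
qed

lemma CH12: "ch \<in> CH \<Longrightarrow> set ch \<subseteq> {1,2}"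
proof -
  assume "ch \<in> CH"
  then have "(\<exists>X c. ch = lam X c) \<or> (\<exists>X. ch = phi X)" unfolding CH_def by auto
  then show ?thesis using lam12 phi12 by (elim disjE exE) simp_all
qed

lemma CHS12: "ys \<in> CHS \<Longrightarrow> set ys \<subseteq> {1,2}"
  unfolding CHS_def using CH12 by (auto dest: in_set_dropD)

lemma S_intros:
  "X \<in> Xs \<Longrightarrow> Rd X \<in> S" "X \<in> Xs \<Longrightarrow> Bk X \<in> S"
  "X \<in> Xs \<Longrightarrow> ch \<in> CH \<Longrightarrow> GoR X ch \<in> S"
  "X \<in> Xs \<Longrightarrow> ys \<in> CHS \<Longrightarrow> Out (Some X) ys \<in> S"
  "ys \<in> CHS \<Longrightarrow> Out None ys \<in> S" "FinBk \<in> S" "Hlt \<in> S"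
  unfolding S_def by auto

lemma S_dests:
  "Rd X \<in> S \<Longrightarrow> X \<in> Xs" "Bk X \<in> S \<Longrightarrow> X \<in> Xs"
  "GoR X ch \<in> S \<Longrightarrow> X \<in> Xs \<and> ch \<in> CH"
  "Out (Some X) ys \<in> S \<Longrightarrow> X \<in> Xs \<and> ys \<in> CHS"
  "Out None ys \<in> S \<Longrightarrow> ys \<in> CHS"
  unfolding S_def by auto

lemma Out_S_tl: "Out nx (y # ys) \<in> S \<Longrightarrow> Out nx ys \<in> S"
  by (cases nx) (auto dest!: S_dests intro!: S_intros dest: CHS_tl)

lemma Out_S_nil: "Out nx [] \<in> S \<Longrightarrow> (case nx of None \<Rightarrow> FinBk | Some X \<Rightarrow> Bk X) \<in> S"
  by (cases nx) (auto dest!: S_dests intro!: S_intros)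

lemma closure:
  assumes "q \<in> S" "a \<in> Sig" "dT q a = Some (q', b, d)"
  shows "q' \<in> S \<and> b \<in> Sig"
proof -
  have s12: "{1,2} \<subseteq> Sig" unfolding Sig_def by auto
  have sk: "Suc k \<in> Sig" "Suc (Suc k) \<in> Sig" "0 \<in> Sig" unfolding Sig_def by auto
  show ?thesis
  proof (cases q)
    case (Rd X)
    then have X: "X \<in> Xs" using assms(1) S_dests by auto
    show ?thesis
    proof (cases "1 \<le> a \<and> a \<le> k")
      case True
      then have "dl X (a - 1) \<in> Xs" "lam X (a - 1) \<in> CH" using dlXs[OF X] X unfolding CH_def by auto
      then have "GoR (dl X (a - 1)) (lam X (a - 1)) \<in> S" by (rule S_intros)
      then show ?thesis using assms(3) True Rd sk by auto
    next
      case False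
      have "phi X \<in> CHS" using X CH_CHS unfolding CH_def by auto
      then have "Out None (phi X) \<in> S" by (rule S_intros)
      then show ?thesis using assms(3) False Rd sk by (auto split: if_splits)
    qed
  next
    case (GoR X ch)
    then have X: "X \<in> Xs" "ch \<in> CH" using assms(1) S_dests by auto
    then have "ch \<in> CHS" using CH_CHS by auto
    then have "Out (Some X) ch \<in> S" using X by (intro S_intros)
    then show ?thesis using assms GoR sk by (auto split: if_splits)
  next
    case (Out nx ch)
    show ?thesis
    proof (cases ch)
      case Nil
      then show ?thesis using assms Out Out_S_nil sk by (auto split: if_splits)
    next
      case (Cons y ys)
      have ch: "ch \<in> CHS" using assms(1) Out by (cases nx) (auto dest!: S_dests)
      then have "y \<in> {1,2}" using Cons CHS12[of ch] by auto
      moreover have "Out nx ys \<in> S" using assms(1) Out Cons Out_S_tl by simp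
      ultimately show ?thesis using assms Out Cons s12 by (auto split: if_splits)
    qed
  next
    case (Bk X)
    then have "Rd X \<in> S" using assms(1) S_dests S_intros by blast
    then show ?thesis using assms Bk by (auto split: if_splits)
  next
    case FinBk
    then show ?thesis using assms S_intros by (auto split: if_splits)
  next
    case Hlt
    then show ?thesis using assms by simp
  qed
qed

lemma trans_closed:
  assumes tr: "trans M q a = Some (q', b, d)"
  shows "q' \<in> states M \<and> b \<in> symbols M"
proof -
  have qa: "q \<in> to_nat ` S" "a \<in> Sig" using tr by (simp_all add: M_def split: if_splits)
  then obtain q0 where q0: "q0 \<in> S" "q = to_nat q0" by blast
  then obtain q0' where "dT q0 a = Some (q0', b, d)" "q' = to_nat q0'"
    using tr qa by (auto simp: M_def)
  then show ?thesis using closure[OF q0(1) qa(2)] by (simp add: M_def)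
qed

lemma trans_out: "q \<notin> states M \<or> a \<notin> symbols M \<Longrightarrow> trans M q a = None"
  by (auto simp add: M_def)

lemma wf: "wf_tm M"
  unfolding wf_tm_def
proof (intro conjI)
  show "finite (states M)" using finS by (simp add: M_def)
  show "finite (symbols M)" by (simp add: M_def Sig_def)
  show "0 \<in> symbols M" by (simp add: M_def Sig_def)
  show "start M \<in> states M" using nilXs S_intros by (simp add: M_def)
  show "\<forall>q a. (q \<notin> states M \<or> a \<notin> symbols M) \<longrightarrow> trans M q a = None" using trans_out by blast
  show "\<forall>q a q' b d. trans M q a = Some (q', b, d) \<longrightarrow> q' \<in> states M \<and> b \<in> symbols M"
    using trans_closed by blast
qed

lemma step_M:
  assumes "q \<in> S" "head_sym rs \<in> Sig" "dT q (head_sym rs) = Some (q', b, d)"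
  shows "step M (to_nat q, ls, rs) = (case d of Stay \<Rightarrow> (to_nat q', ls, b # tl rs)
           | Rgt \<Rightarrow> (to_nat q', b # ls, tl rs)
           | Lft \<Rightarrow> (case ls of [] \<Rightarrow> (to_nat q', [], b # tl rs) | l # ls' \<Rightarrow> (to_nat q', ls', l # b # tl rs)))"
  using assms unfolding step_def M_def by (auto split: dir.splits list.splits)

lemma halted_Hlt: "halted M (to_nat Hlt, ls, rs)"
  unfolding halted_def M_def by simp

end

context tmloc
begin

lemma funpow_chain: "(f ^^ n) x = y \<Longrightarrow> (f ^^ m) y = z \<Longrightarrow> (f ^^ (n + m)) x = z"
  by (simp add: funpow_add add.commute[of n m])


lemma GoR_skip:
  "GoR X ch \<in> S \<Longrightarrow> \<forall>a\<in>set xs. 1 \<le> a \<and> a \<le> k \<Longrightarrow>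
   (step M ^^ length xs) (to_nat (GoR X ch), ls, xs @ rs) = (to_nat (GoR X ch), rev xs @ ls, rs)"
proof (induction xs arbitrary: ls)
  case Nil then show ?case by simp
next
  case (Cons x xs)
  have "x \<in> Sig" using Cons.prems unfolding Sig_def by auto
  then have "step M (to_nat (GoR X ch), ls, (x # xs) @ rs) = (to_nat (GoR X ch), x # ls, xs @ rs)"
    using step_M[of "GoR X ch" "(x # xs) @ rs" "GoR X ch" x Rgt ls] Cons.prems by (simp add: head_sym_def)
  then show ?case using Cons.IH[of "x # ls"] Cons.prems by (simp add: funpow_Suc_right del: funpow.simps)
qed

lemma Out_skip:
  "Out nx ch \<in> S \<Longrightarrow> set xs \<subseteq> {1,2} \<Longrightarrow>
   (step M ^^ length xs) (to_nat (Out nx ch), ls, xs @ rs) = (to_nat (Out nx ch), rev xs @ ls, rs)"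
proof (induction xs arbitrary: ls)
  case Nil then show ?case by simp
next
  case (Cons x xs)
  have "x \<in> Sig" using Cons.prems unfolding Sig_def by auto
  then have "step M (to_nat (Out nx ch), ls, (x # xs) @ rs) = (to_nat (Out nx ch), x # ls, xs @ rs)"
    using step_M[of "Out nx ch" "(x # xs) @ rs" "Out nx ch" x Rgt ls] Cons.prems by (auto simp add: head_sym_def)
  then show ?case using Cons.IH[of "x # ls"] Cons.prems by (simp add: funpow_Suc_right del: funpow.simps)
qed

lemma Out_write:
  "Out nx ys \<in> S \<Longrightarrow> blank zs \<Longrightarrow>
   \<exists>zs'. blank zs' \<and> (step M ^^ length ys) (to_nat (Out nx ys), ls, zs) = (to_nat (Out nx []), rev ys @ ls, zs')"
proof (induction ys arbitrary: ls zs)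
  case Nil then show ?case by auto
next
  case (Cons y ys)
  have "0 \<in> Sig" unfolding Sig_def by auto
  then have "step M (to_nat (Out nx (y # ys)), ls, zs) = (to_nat (Out nx ys), y # ls, tl zs)"
    using step_M[of "Out nx (y # ys)" zs "Out nx ys" y Rgt ls] Cons.prems blank_hd[of zs] by simp
  moreover have o: "Out nx ys \<in> S" using Cons.prems(1) by (rule Out_S_tl)
  moreover have b: "blank (tl zs)" using Cons.prems(2) by (rule blank_tl)
  moreover obtain zs' where "blank zs'"
    "(step M ^^ length ys) (to_nat (Out nx ys), y # ls, tl zs) = (to_nat (Out nx []), rev ys @ y # ls, zs')"
    using Cons.IH[OF o b, of "y # ls"] by blast
  ultimately show ?case by (auto simp add: funpow_Suc_right simp del: funpow.simps)
qed

lemma Out_end: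
  "Out nx [] \<in> S \<Longrightarrow> blank zs \<Longrightarrow>
   step M (to_nat (Out nx []), ls, zs) = (to_nat (case nx of None \<Rightarrow> FinBk | Some X \<Rightarrow> Bk X), ls, 0 # tl zs)"
  using step_M[of "Out nx []" zs "case nx of None \<Rightarrow> FinBk | Some X \<Rightarrow> Bk X" 0 Stay ls] blank_hd[of zs]
  by (simp add: Sig_def)

lemma Bk_move:
  "Bk X \<in> S \<Longrightarrow> \<forall>a\<in>set xs. a \<in> Sig \<and> a \<noteq> Suc k \<Longrightarrow> rs \<noteq> [] \<Longrightarrow> hd rs \<in> Sig \<Longrightarrow> hd rs \<noteq> Suc k \<Longrightarrow>
   (step M ^^ length xs) (to_nat (Bk X), xs @ ls, rs) = (to_nat (Bk X), ls, rev xs @ rs)"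
proof (induction xs arbitrary: rs)
  case Nil then show ?case by simp
next
  case (Cons x xs)
  have "step M (to_nat (Bk X), (x # xs) @ ls, rs) = (to_nat (Bk X), xs @ ls, x # rs)"
    using step_M[of "Bk X" rs "Bk X" "hd rs" Lft "(x # xs) @ ls"] Cons.prems
    by (cases rs) (auto simp: head_sym_def)
  then show ?case using Cons.IH[of "x # rs"] Cons.prems by (simp add: funpow_Suc_right del: funpow.simps)
qed

lemma FinBk_move:
  "\<forall>a\<in>set xs. a \<in> Sig \<and> a \<noteq> Suc (Suc k) \<Longrightarrow> rs \<noteq> [] \<Longrightarrow> hd rs \<in> Sig \<Longrightarrow> hd rs \<noteq> Suc (Suc k) \<Longrightarrow>
   (step M ^^ length xs) (to_nat FinBk, xs @ ls, rs) = (to_nat FinBk, ls, rev xs @ rs)"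
proof (induction xs arbitrary: rs)
  case Nil then show ?case by simp
next
  case (Cons x xs)
  have "step M (to_nat FinBk, (x # xs) @ ls, rs) = (to_nat FinBk, xs @ ls, x # rs)"
    using step_M[of FinBk rs FinBk "hd rs" Lft "(x # xs) @ ls"] Cons.prems S_intros(6)
    by (cases rs) (auto simp: head_sym_def)
  then show ?case using Cons.IH[of "x # rs"] Cons.prems by (simp add: funpow_Suc_right del: funpow.simps)
qed

end

context tmloc
begin

definition tailp :: "bool \<Rightarrow> nat list \<Rightarrow> nat list \<Rightarrow> nat list" where
  "tailp b ou zs = (if b then Suc (Suc k) # ou @ zs else [])"

lemma Sig_simps: "0 \<in> Sig" "Suc k \<in> Sig" "Suc (Suc k) \<in> Sig" "1 \<in> Sig" "2 \<in> Sig"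
  "a \<le> k \<Longrightarrow> a \<in> Sig"
  unfolding Sig_def by auto

lemma cycle:
  assumes X: "X \<in> Xs" and c: "c < k" and r: "\<forall>a\<in>set r. a < k" and ou: "set ou \<subseteq> {1,2}"
    and zs: "blank zs" and b: "\<not> b \<longrightarrow> ou = [] \<and> zs = []"
  shows "\<exists>zs'. blank zs' \<and>
    (step M ^^ (2 * length r + 2 * length ou + 2 * length (lam X c) + 6))
       (to_nat (Rd X), ls, map Suc (c # r) @ tailp b ou zs)
    = (to_nat (Rd (dl X c)), Suc k # ls, map Suc r @ Suc (Suc k) # (ou @ lam X c) @ zs')"
proof -
  define e where "e = map Suc r"
  define ch where "ch = lam X c"
  define X' where "X' = dl X c"
  define ls1 where "ls1 = Suc k # ls"
  have X'in: "X' \<in> Xs" using dlXs[OF X c] X'_def by simp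
  have chCH: "ch \<in> CH" unfolding ch_def CH_def using X c by auto
  have chCHS: "ch \<in> CHS" using CH_CHS[OF chCH] .
  have ch12: "set ch \<subseteq> {1,2}" using CH12[OF chCH] .
  have e1k: "\<forall>a\<in>set e. 1 \<le> a \<and> a \<le> k" using r e_def by auto
  have sGoR: "GoR X' ch \<in> S" using X'in chCH by (rule S_intros)
  have sOut: "Out (Some X') ch \<in> S" using X'in chCHS by (rule S_intros)
  have sOut0: "Out (Some X') [] \<in> S" using sOut
  proof -
    have "\<And>ys. Out (Some X') ys \<in> S \<Longrightarrow> Out (Some X') [] \<in> S"
    proof -
      fix ys show "Out (Some X') ys \<in> S \<Longrightarrow> Out (Some X') [] \<in> S"
        by (induction ys) (auto dest: Out_S_tl)
    qed
    then show ?thesis using sOut .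
  qed
  have sBk: "Bk X' \<in> S" using X'in by (rule S_intros)
  have sRd: "Rd X \<in> S" using X by (rule S_intros)
  have s1: "(step M ^^ 1) (to_nat (Rd X), ls, map Suc (c # r) @ tailp b ou zs)
      = (to_nat (GoR X' ch), ls1, e @ tailp b ou zs)"
    using step_M[of "Rd X" "map Suc (c # r) @ tailp b ou zs" "GoR X' ch" "Suc k" Rgt ls] sRd c
    by (simp add: head_sym_def Sig_simps X'_def ch_def e_def ls1_def)
  have s2: "(step M ^^ length r) (to_nat (GoR X' ch), ls1, e @ tailp b ou zs)
      = (to_nat (GoR X' ch), rev e @ ls1, tailp b ou zs)"
    using GoR_skip[OF sGoR e1k, of ls1 "tailp b ou zs"] e_def by simp
  have s3: "(step M ^^ 1) (to_nat (GoR X' ch), rev e @ ls1, tailp b ou zs)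
      = (to_nat (Out (Some X') ch), Suc (Suc k) # rev e @ ls1, ou @ zs)"
  proof (cases b)
    case True
    then show ?thesis
      using step_M[of "GoR X' ch" "tailp b ou zs" "Out (Some X') ch" "Suc (Suc k)" Rgt "rev e @ ls1"] sGoR
      by (simp add: head_sym_def Sig_simps tailp_def)
  next
    case False
    then show ?thesis
      using step_M[of "GoR X' ch" "tailp b ou zs" "Out (Some X') ch" "Suc (Suc k)" Rgt "rev e @ ls1"] sGoR b
      by (simp add: head_sym_def Sig_simps tailp_def)
  qed
  have s4: "(step M ^^ length ou) (to_nat (Out (Some X') ch), Suc (Suc k) # rev e @ ls1, ou @ zs)
      = (to_nat (Out (Some X') ch), rev ou @ Suc (Suc k) # rev e @ ls1, zs)"
    using Out_skip[OF sOut ou] by simp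
  obtain zs1 where zs1: "blank zs1" and s5: "(step M ^^ length ch) (to_nat (Out (Some X') ch), rev ou @ Suc (Suc k) # rev e @ ls1, zs)
      = (to_nat (Out (Some X') []), rev ch @ rev ou @ Suc (Suc k) # rev e @ ls1, zs1)"
    using Out_write[OF sOut zs] by auto
  have s6: "(step M ^^ 1) (to_nat (Out (Some X') []), rev ch @ rev ou @ Suc (Suc k) # rev e @ ls1, zs1)
      = (to_nat (Bk X'), rev ch @ rev ou @ Suc (Suc k) # rev e @ ls1, 0 # tl zs1)"
    using Out_end[OF sOut0 zs1] by simp
  define xs where "xs = rev ch @ rev ou @ Suc (Suc k) # rev e"
  have k2': "Suc k \<noteq> 1" "Suc k \<noteq> 2" using k2 by auto
  have xsok: "\<forall>a\<in>set xs. a \<in> Sig \<and> a \<noteq> Suc k"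
    using ch12 ou e1k k2' unfolding xs_def by (auto simp: Sig_simps)
  have s7: "(step M ^^ length xs) (to_nat (Bk X'), xs @ ls1, 0 # tl zs1)
      = (to_nat (Bk X'), ls1, rev xs @ 0 # tl zs1)"
    using Bk_move[OF sBk xsok, of "0 # tl zs1" ls1] by (simp add: Sig_simps)
  have eqx: "xs @ ls1 = rev ch @ rev ou @ Suc (Suc k) # rev e @ ls1" by (simp add: xs_def)
  note s7' = s7[unfolded eqx]
  have revxs: "rev xs = e @ Suc (Suc k) # ou @ ch" unfolding xs_def by simp
  have hdok: "hd (rev xs @ 0 # tl zs1) \<in> Sig \<and> hd (rev xs @ 0 # tl zs1) \<noteq> Suc k"
  proof -
    have "hd (rev xs @ 0 # tl zs1) \<in> set xs" unfolding revxs by (cases e) (auto simp: xs_def)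
    then show ?thesis using xsok by blast
  qed
  have s8: "(step M ^^ 1) (to_nat (Bk X'), ls1, rev xs @ 0 # tl zs1)
      = (to_nat (Bk X'), ls, Suc k # rev xs @ 0 # tl zs1)"
  proof -
    have hs: "head_sym (rev xs @ 0 # tl zs1) = hd (rev xs @ 0 # tl zs1)"
      by (cases "rev xs @ 0 # tl zs1") (auto simp: head_sym_def)
    have "step M (to_nat (Bk X'), Suc k # ls, rev xs @ 0 # tl zs1) = (to_nat (Bk X'), ls, Suc k # rev xs @ 0 # tl zs1)"
      using step_M[of "Bk X'" "rev xs @ 0 # tl zs1" "Bk X'" "hd (rev xs @ 0 # tl zs1)" Lft "Suc k # ls"] sBk hdok hs
      by (cases "rev xs @ 0 # tl zs1") auto
    then show ?thesis by (simp add: ls1_def)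
  qed
  have s9: "(step M ^^ 1) (to_nat (Bk X'), ls, Suc k # rev xs @ 0 # tl zs1)
      = (to_nat (Rd X'), Suc k # ls, rev xs @ 0 # tl zs1)"
    using step_M[of "Bk X'" "Suc k # rev xs @ 0 # tl zs1" "Rd X'" "Suc k" Rgt ls] sBk
    by (simp add: head_sym_def Sig_simps)
  have tot: "(step M ^^ (1 + length r + 1 + length ou + length ch + 1 + length xs + 1 + 1))
       (to_nat (Rd X), ls, map Suc (c # r) @ tailp b ou zs)
     = (to_nat (Rd X'), Suc k # ls, rev xs @ 0 # tl zs1)"
    using funpow_chain[OF funpow_chain[OF funpow_chain[OF funpow_chain[OF funpow_chain[OF
          funpow_chain[OF funpow_chain[OF funpow_chain[OF s1 s2] s3] s4] s5] s6] s7'] s8] s9] .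
  have cnt: "1 + length r + 1 + length ou + length ch + 1 + length xs + 1 + 1
      = 2 * length r + 2 * length ou + 2 * length (lam X c) + 6"
    unfolding xs_def ch_def e_def by simp
  have bl: "blank (0 # tl zs1)" using zs1 blank_tl by (simp add: blank_def)
  have tot2: "(step M ^^ (2 * length r + 2 * length ou + 2 * length (lam X c) + 6))
       (to_nat (Rd X), ls, map Suc (c # r) @ tailp b ou zs) = (to_nat (Rd X'), Suc k # ls, rev xs @ 0 # tl zs1)"
    using tot unfolding cnt .
  have eqt: "rev xs @ 0 # tl zs1 = map Suc r @ Suc (Suc k) # (ou @ lam X c) @ 0 # tl zs1"
    using revxs e_def ch_def by simp
  show ?thesis
  proof (intro exI conjI)
    show "blank (0 # tl zs1)" by (rule bl)
    show "(step M ^^ (2 * length r + 2 * length ou + 2 * length (lam X c) + 6))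
       (to_nat (Rd X), ls, map Suc (c # r) @ tailp b ou zs) =
       (to_nat (Rd (dl X c)), Suc k # ls, map Suc r @ Suc (Suc k) # (ou @ lam X c) @ 0 # tl zs1)"
      using tot2 unfolding eqt X'_def .
  qed
qed

lemma final:
  assumes X: "X \<in> Xs" and ou: "set ou \<subseteq> {1,2}"
    and zs: "blank zs" and b: "\<not> b \<longrightarrow> ou = [] \<and> zs = []"
  shows "\<exists>zs'. (step M ^^ (2 * length ou + 2 * length (phi X) + 4))
       (to_nat (Rd X), ls, tailp b ou zs)
    = (to_nat Hlt, Suc (Suc k) # ls, ou @ phi X @ 0 # zs')"
proof -
  define ch where "ch = phi X"
  have chCH: "ch \<in> CH" unfolding ch_def CH_def using X by auto
  have chCHS: "ch \<in> CHS" using CH_CHS[OF chCH] .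
  have ch12: "set ch \<subseteq> {1,2}" using CH12[OF chCH] .
  have sOut: "Out None ch \<in> S" using chCHS by (rule S_intros)
  have sOut0: "Out None [] \<in> S"
  proof -
    have "\<And>ys. Out None ys \<in> S \<Longrightarrow> Out None [] \<in> S"
    proof -
      fix ys show "Out None ys \<in> S \<Longrightarrow> Out None [] \<in> S"
        by (induction ys) (auto dest: Out_S_tl)
    qed
    then show ?thesis using sOut .
  qed
  have sRd: "Rd X \<in> S" using X by (rule S_intros)
  have s1: "(step M ^^ 1) (to_nat (Rd X), ls, tailp b ou zs)
      = (to_nat (Out None ch), Suc (Suc k) # ls, ou @ zs)"
  proof (cases b)
    case True
    then show ?thesis
      using step_M[of "Rd X" "tailp b ou zs" "Out None ch" "Suc (Suc k)" Rgt ls] sRd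
      by (simp add: head_sym_def Sig_simps tailp_def ch_def)
  next
    case False
    then show ?thesis
      using step_M[of "Rd X" "tailp b ou zs" "Out None ch" "Suc (Suc k)" Rgt ls] sRd b
      by (simp add: head_sym_def Sig_simps tailp_def ch_def)
  qed
  have s2: "(step M ^^ length ou) (to_nat (Out None ch), Suc (Suc k) # ls, ou @ zs)
      = (to_nat (Out None ch), rev ou @ Suc (Suc k) # ls, zs)"
    using Out_skip[OF sOut ou] by simp
  obtain zs1 where zs1: "blank zs1" and s3: "(step M ^^ length ch) (to_nat (Out None ch), rev ou @ Suc (Suc k) # ls, zs)
      = (to_nat (Out None []), rev ch @ rev ou @ Suc (Suc k) # ls, zs1)"
    using Out_write[OF sOut zs] by auto
  have s4: "(step M ^^ 1) (to_nat (Out None []), rev ch @ rev ou @ Suc (Suc k) # ls, zs1)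
      = (to_nat FinBk, rev ch @ rev ou @ Suc (Suc k) # ls, 0 # tl zs1)"
    using Out_end[OF sOut0 zs1] by simp
  define xs where "xs = rev ch @ rev ou"
  have xsok: "\<forall>a\<in>set xs. a \<in> Sig \<and> a \<noteq> Suc (Suc k)"
    using ch12 ou k2 unfolding xs_def by (auto simp: Sig_simps)
  have s5: "(step M ^^ length xs) (to_nat FinBk, xs @ Suc (Suc k) # ls, 0 # tl zs1)
      = (to_nat FinBk, Suc (Suc k) # ls, rev xs @ 0 # tl zs1)"
    using FinBk_move[OF xsok, of "0 # tl zs1" "Suc (Suc k) # ls"] by (simp add: Sig_simps)
  have eqx: "xs @ Suc (Suc k) # ls = rev ch @ rev ou @ Suc (Suc k) # ls" by (simp add: xs_def)
  note s5' = s5[unfolded eqx]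
  have revxs: "rev xs = ou @ ch" unfolding xs_def by simp
  have hdok: "hd (rev xs @ 0 # tl zs1) \<in> Sig \<and> hd (rev xs @ 0 # tl zs1) \<noteq> Suc (Suc k)"
  proof (cases "rev xs")
    case Nil then show ?thesis by (simp add: Sig_simps)
  next
    case (Cons y ys)
    then have "y \<in> set xs" by (metis list.set_intros(1) set_rev)
    then show ?thesis using xsok Cons by simp
  qed
  have s6: "(step M ^^ 1) (to_nat FinBk, Suc (Suc k) # ls, rev xs @ 0 # tl zs1)
      = (to_nat FinBk, ls, Suc (Suc k) # rev xs @ 0 # tl zs1)"
  proof -
    have hs: "head_sym (rev xs @ 0 # tl zs1) = hd (rev xs @ 0 # tl zs1)"
      by (cases "rev xs @ 0 # tl zs1") (auto simp: head_sym_def)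
    show ?thesis
      using step_M[of FinBk "rev xs @ 0 # tl zs1" FinBk "hd (rev xs @ 0 # tl zs1)" Lft "Suc (Suc k) # ls"]
        S_intros(6) hdok hs
      by (cases "rev xs @ 0 # tl zs1") auto
  qed
  have s7: "(step M ^^ 1) (to_nat FinBk, ls, Suc (Suc k) # rev xs @ 0 # tl zs1)
      = (to_nat Hlt, Suc (Suc k) # ls, rev xs @ 0 # tl zs1)"
    using step_M[of FinBk "Suc (Suc k) # rev xs @ 0 # tl zs1" Hlt "Suc (Suc k)" Rgt ls] S_intros(6)
    by (simp add: head_sym_def Sig_simps)
  have tot: "(step M ^^ (1 + length ou + length ch + 1 + length xs + 1 + 1))
       (to_nat (Rd X), ls, tailp b ou zs)
     = (to_nat Hlt, Suc (Suc k) # ls, rev xs @ 0 # tl zs1)"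
    using funpow_chain[OF funpow_chain[OF funpow_chain[OF funpow_chain[OF funpow_chain[OF
          funpow_chain[OF s1 s2] s3] s4] s5'] s6] s7] .
  have cnt: "1 + length ou + length ch + 1 + length xs + 1 + 1 = 2 * length ou + 2 * length (phi X) + 4"
    unfolding xs_def ch_def by simp
  have tot2: "(step M ^^ (2 * length ou + 2 * length (phi X) + 4))
       (to_nat (Rd X), ls, tailp b ou zs) = (to_nat Hlt, Suc (Suc k) # ls, rev xs @ 0 # tl zs1)"
    using tot unfolding cnt .
  have eqt: "rev xs @ 0 # tl zs1 = ou @ phi X @ 0 # tl zs1" using revxs ch_def by simp
  show ?thesis using tot2 unfolding eqt by blast
qed

fun outs :: "nat list \<Rightarrow> nat list \<Rightarrow> nat list" where
  "outs X [] = phi X"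
| "outs X (c # r) = lam X c @ outs (dl X c) r"

definition B :: nat where "B = Max (length ` CH)"

lemma B_ge: "ch \<in> CH \<Longrightarrow> length ch \<le> B"
  unfolding B_def using finCH by (auto intro: Max_ge)

lemma lam_B: "X \<in> Xs \<Longrightarrow> c < k \<Longrightarrow> length (lam X c) \<le> B"
  by (rule B_ge) (auto simp: CH_def)
lemma phi_B: "X \<in> Xs \<Longrightarrow> length (phi X) \<le> B"
  by (rule B_ge) (auto simp: CH_def)

definition Tb :: "nat \<Rightarrow> nat \<Rightarrow> nat" where
  "Tb m o' = (m + 1) * (2 * m + 2 * o' + 2 * B * (m + 1) + 7)"

lemma outs12: "set (outs X r) \<subseteq> {1,2}"
  by (induction r arbitrary: X) (use lam12 phi12 in auto)

lemma takeWhile_out: "set (ys :: nat list) \<subseteq> {1,2} \<Longrightarrow> takeWhile (\<lambda>a. a \<noteq> 0) (ys @ 0 # zs) = ys"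
  by (induction ys) auto

lemma run:
  "X \<in> Xs \<Longrightarrow> \<forall>a\<in>set r. a < k \<Longrightarrow> set ou \<subseteq> {1,2} \<Longrightarrow> blank zs \<Longrightarrow> (\<not> b \<longrightarrow> ou = [] \<and> zs = []) \<Longrightarrow>
   \<exists>t \<le> Tb (length r) (length ou).
     halted M ((step M ^^ t) (to_nat (Rd X), ls, map Suc r @ tailp b ou zs)) \<and>
     tape_output ((step M ^^ t) (to_nat (Rd X), ls, map Suc r @ tailp b ou zs)) = ou @ outs X r"
proof (induction r arbitrary: X ls ou zs b)
  case Nil
  obtain zs' where f: "(step M ^^ (2 * length ou + 2 * length (phi X) + 4))
       (to_nat (Rd X), ls, tailp b ou zs) = (to_nat Hlt, Suc (Suc k) # ls, ou @ phi X @ 0 # zs')"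
    using final[OF Nil.prems(1,3,4,5)] by blast
  have "2 * length ou + 2 * length (phi X) + 4 \<le> Tb 0 (length ou)"
    using phi_B[OF Nil.prems(1)] by (simp add: Tb_def)
  moreover have "set (ou @ phi X) \<subseteq> {1,2}" using Nil.prems(3) phi12 by auto
  ultimately show ?case using f halted_Hlt
    by (intro exI[of _ "2 * length ou + 2 * length (phi X) + 4"])
       (simp add: tape_output_def takeWhile_out[of "ou @ phi X", simplified])
next
  case (Cons c r)
  have c: "c < k" and r: "\<forall>a\<in>set r. a < k" using Cons.prems(2) by auto
  obtain zs' where zs': "blank zs'" and cyc: "(step M ^^ (2 * length r + 2 * length ou + 2 * length (lam X c) + 6))
       (to_nat (Rd X), ls, map Suc (c # r) @ tailp b ou zs)
    = (to_nat (Rd (dl X c)), Suc k # ls, map Suc r @ Suc (Suc k) # (ou @ lam X c) @ zs')"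
    using cycle[OF Cons.prems(1) c r Cons.prems(3,4,5)] by blast
  have X': "dl X c \<in> Xs" using dlXs[OF Cons.prems(1) c] .
  have ou': "set (ou @ lam X c) \<subseteq> {1,2}" using Cons.prems(3) lam12 by auto
  obtain t where t: "t \<le> Tb (length r) (length (ou @ lam X c))"
    and h: "halted M ((step M ^^ t) (to_nat (Rd (dl X c)), Suc k # ls, map Suc r @ tailp True (ou @ lam X c) zs'))"
    and o: "tape_output ((step M ^^ t) (to_nat (Rd (dl X c)), Suc k # ls, map Suc r @ tailp True (ou @ lam X c) zs'))
            = (ou @ lam X c) @ outs (dl X c) r"
    using Cons.IH[OF X' r ou' zs', of True "Suc k # ls"] by auto
  have eqc: "map Suc r @ tailp True (ou @ lam X c) zs' = map Suc r @ Suc (Suc k) # (ou @ lam X c) @ zs'"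
    by (simp add: tailp_def)
  define t0 where "t0 = 2 * length r + 2 * length ou + 2 * length (lam X c) + 6"
  have all: "(step M ^^ (t0 + t)) (to_nat (Rd X), ls, map Suc (c # r) @ tailp b ou zs)
     = (step M ^^ t) (to_nat (Rd (dl X c)), Suc k # ls, map Suc r @ tailp True (ou @ lam X c) zs')"
    using cyc unfolding eqc t0_def by (simp add: funpow_add add.commute[of _ t])
  have lB: "length (lam X c) \<le> B" using lam_B[OF Cons.prems(1) c] .
  have "t0 + t \<le> Tb (length (c # r)) (length ou)"
  proof -
    have "Tb (length r) (length (ou @ lam X c)) \<le> Tb (length r) (length ou + B)"
      unfolding Tb_def using lB by (intro mult_le_mono2) simp
    then have "t \<le> Tb (length r) (length ou + B)" using t by linarith
    moreover have "t0 \<le> 2 * length r + 2 * length ou + 2 * B + 6" using lB t0_def by simp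
    moreover have "(2 * length r + 2 * length ou + 2 * B + 6) + Tb (length r) (length ou + B)
        \<le> Tb (length (c # r)) (length ou)"
      by (simp add: Tb_def algebra_simps)
    ultimately show ?thesis by linarith
  qed
  then show ?case using h o all by (intro exI[of _ "t0 + t"]) simp
qed

theorem tm_main:
  assumes "\<forall>a\<in>set s. a < k"
  shows "runs_within M (enc_string s) ((6 * B + 11) * length s ^ 2 + (6 * B + 11)) (outs [] s)"
proof -
  obtain t where t: "t \<le> Tb (length s) 0"
    and h: "halted M ((step M ^^ t) (to_nat (Rd []), [], map Suc s @ tailp False [] []))"
    and o: "tape_output ((step M ^^ t) (to_nat (Rd []), [], map Suc s @ tailp False [] [])) = outs [] s"
    using run[OF nilXs assms, of "[]" "[]" False "[]"] by (auto simp: blank_def)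
  have ini: "init M (enc_string s) = (to_nat (Rd []), [], map Suc s @ tailp False [] [])"
    by (simp add: init_def M_def enc_string_def tailp_def)
  have "Tb (length s) 0 \<le> (6 * B + 11) * length s ^ 2 + (6 * B + 11)"
  proof -
    define n where "n = length s"
    have nn: "n \<le> n ^ 2" by (simp add: power2_eq_square)
    have "Tb n 0 = (2 * B + 2) * n ^ 2 + (4 * B + 9) * n + (2 * B + 7)"
      by (simp add: Tb_def power2_eq_square algebra_simps)
    also have "\<dots> \<le> (2 * B + 2) * n ^ 2 + (4 * B + 9) * n ^ 2 + (2 * B + 7)"
      using mult_le_mono2[OF nn, of "4 * B + 9"] by simp
    also have "\<dots> \<le> (6 * B + 11) * n ^ 2 + (6 * B + 11)" by (simp add: algebra_simps)
    finally show ?thesis unfolding n_def .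
  qed
  then show ?thesis unfolding runs_within_def ini using t h o by (intro exI[of _ t]) auto
qed

end

lemma enc_flips_12: "set (enc_flips fs) \<subseteq> {1,2}"
  by (induction fs) (auto simp: enc_flips_def)

lemma enc_flips_append: "enc_flips (a @ b) = enc_flips a @ enc_flips b"
  by (simp add: enc_flips_def)

lemma card_le_k: "set X \<subseteq> {0..<k} \<Longrightarrow> card (set X) \<le> k"
  using card_mono[of "{0..<k}" "set X"] by simp

lemma tmloc_inst:
  assumes k2: "2 \<le> k" and kK: "k < K"
  shows "tmloc k {X. set X \<subseteq> {0..<k} \<and> length X \<le> K} (dlK K)
           (\<lambda>X c. enc_flips (flK K X c)) (\<lambda>X. enc_flips (opt X))"
proof
  show "2 \<le> k" by (rule k2)
  show "finite {X. set X \<subseteq> {0..<k} \<and> length X \<le> K}" by (rule finite_lists_length_le) simp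
  show "[] \<in> {X. set X \<subseteq> {0..<k} \<and> length X \<le> K}" by simp
  show "\<And>X c. set (enc_flips (flK K X c)) \<subseteq> {1, 2}" by (rule enc_flips_12)
  show "\<And>X. set (enc_flips (opt X)) \<subseteq> {1, 2}" by (rule enc_flips_12)
  fix X c
  assume X: "X \<in> {X. set X \<subseteq> {0..<k} \<and> length X \<le> K}" and c: "c < k"
  show "dlK K X c \<in> {X. set X \<subseteq> {0..<k} \<and> length X \<le> K}"
  proof (cases "length X < K")
    case True
    then show ?thesis using X c by (auto simp: dlK_def)
  next
    case False
    have s: "set (snd (runG X [c])) = set X \<union> {c}" using runG_set[of X "[c]"] by simp
    have "length (snd (runG X [c])) \<le> 1 + card (set X)" using runG_lenT[of X "[c]"] by simp
    moreover have "card (set X) \<le> k" using X card_le_k by auto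
    ultimately have "length (snd (runG X [c])) \<le> K" using kK by linarith
    then show ?thesis using False s X c by (auto simp: dlK_def)
  qed
qed

lemma outs_eq:
  assumes "tmloc k Xs (dlK K) (\<lambda>X c. enc_flips (flK K X c)) (\<lambda>X. enc_flips (opt X))"
  shows "tmloc.outs (dlK K) (\<lambda>X c. enc_flips (flK K X c)) (\<lambda>X. enc_flips (opt X)) X r
         = enc_flips (fst (trun K X r) @ opt (snd (trun K X r)))"
proof (induction r arbitrary: X)
  case Nil
  then show ?case using tmloc.outs.simps(1)[OF assms] by (simp add: enc_flips_def)
next
  case (Cons c r)
  then show ?case using tmloc.outs.simps(2)[OF assms] by (simp add: enc_flips_append)
qed

lemma real_bound:
  fixes L n m k d :: nat and \<epsilon> :: real
  assumes e: "\<epsilon> > 0" and m0: "m > 0"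
    and h1: "m * L \<le> (k + m) * n"
    and h2: "2 * real k \<le> \<epsilon> * real m"
    and h3: "2 * real k * (1 + \<epsilon>) \<le> \<epsilon> * real m"
    and h4: "m \<le> n"
    and h5: "real n - real k \<le> real d"
  shows "real L \<le> (1 + \<epsilon>) * real d"
proof -
  have r1: "real m * real L \<le> real m * real n + real k * real n"
    using h1 by (metis (mono_tags) add.commute distrib_right of_nat_add of_nat_le_iff of_nat_mult)
  have "2 * real k * real n \<le> \<epsilon> * real m * real n"
    using mult_right_mono[OF h2, of "real n"] by simp
  then have "real m * real L \<le> real m * (real n + \<epsilon> * real n / 2)"
    using r1 by (simp add: algebra_simps)
  then have r2: "real L \<le> real n + \<epsilon> * real n / 2"
    using m0 by (simp add: mult_le_cancel_left_pos)
  have "\<epsilon> * real m \<le> \<epsilon> * real n" using h4 e by simp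
  then have r3: "2 * real k * (1 + \<epsilon>) \<le> \<epsilon> * real n" using h3 by linarith
  have "(1 + \<epsilon>) * (real n - real k) \<le> (1 + \<epsilon>) * real d"
    using h5 e by (intro mult_left_mono) auto
  moreover have "(1 + \<epsilon>) * (real n - real k) = real n + \<epsilon> * real n - real k * (1 + \<epsilon>)"
    by (simp add: algebra_simps)
  ultimately show ?thesis using r2 r3 by linarith
qed

theorem theorem3p7:
  shows "\<forall>k::nat. k \<ge> 2 \<longrightarrow> (\<forall>\<epsilon>::real. \<epsilon> > 0 \<longrightarrow>
     (\<exists>M c e. wf_tm M \<and>
        (\<forall>s. normalized s \<and> set s \<subseteq> {0..<k} \<longrightarrow>
           (\<exists>is. runs_within M (enc_string s) (c * length s ^ e + c) (enc_flips is) \<and>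
                 (\<exists>u. flips is s = Some u \<and> length u = card (set s)) \<and>
                 real (length is) \<le> (1 + \<epsilon>) * real (dg s)))))"
proof (intro allI impI)
  fix k :: nat and \<epsilon> :: real
  assume k2: "2 \<le> k" and e: "\<epsilon> > 0"
  define m where "m = nat \<lceil>2 * real k / \<epsilon>\<rceil> + nat \<lceil>2 * real k * (1 + \<epsilon>) / \<epsilon>\<rceil> + 1"
  define K where "K = k + m"
  have m0: "m > 0" unfolding m_def by simp
  have kK: "k < K" unfolding K_def using m0 by simp
  have h2: "2 * real k \<le> \<epsilon> * real m"
  proof -
    have "2 * real k / \<epsilon> \<le> real m" unfolding m_def by linarith
    then show ?thesis using e by (simp add: divide_le_eq mult.commute)
  qed
  have h3: "2 * real k * (1 + \<epsilon>) \<le> \<epsilon> * real m"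
  proof -
    have "2 * real k * (1 + \<epsilon>) / \<epsilon> \<le> real m" unfolding m_def by linarith
    then show ?thesis using e by (simp add: divide_le_eq mult.commute)
  qed
  define Xs where "Xs = {X. set X \<subseteq> {0..<k} \<and> length X \<le> K}"
  define dl where "dl = dlK K"
  define lam where "lam = (\<lambda>X c. enc_flips (flK K X c))"
  define phi where "phi = (\<lambda>X. enc_flips (opt X))"
  have loc: "tmloc k Xs dl lam phi"
    unfolding Xs_def dl_def lam_def phi_def using tmloc_inst[OF k2 kK] .
  show "\<exists>M c e. wf_tm M \<and>
        (\<forall>s. normalized s \<and> set s \<subseteq> {0..<k} \<longrightarrow>
           (\<exists>is. runs_within M (enc_string s) (c * length s ^ e + c) (enc_flips is) \<and>
                 (\<exists>u. flips is s = Some u \<and> length u = card (set s)) \<and>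
                 real (length is) \<le> (1 + \<epsilon>) * real (dg s)))"
  proof (rule exI[of _ "tmloc.M k Xs dl lam phi"], rule exI[of _ "6 * tmloc.B k Xs lam phi + 11"],
      rule exI[of _ 2], intro conjI allI impI)
    show "wf_tm (tmloc.M k Xs dl lam phi)" using tmloc.wf[OF loc] .
    fix s assume sa: "normalized s \<and> set s \<subseteq> {0..<k}"
    then have ds: "distinct_adj s" and ss: "set s \<subseteq> {0..<k}" using normalized_iff by auto
    define F where "F = fst (trun K [] s)"
    define Xf where "Xf = snd (trun K [] s)"
    define fs where "fs = F @ opt Xf"
    have fl1: "flips F s = Some Xf" using trun_flips[of "[]" s K] ds F_def Xf_def by simp
    have dXf: "distinct_adj Xf" using flips_props[OF fl1 ds] by simp
    have sXf: "set Xf = set s" using trun_set[of K "[]" s] Xf_def by simp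
    obtain u where u: "flips (opt Xf) Xf = Some u" "length u = card (set Xf)"
      using opt_props[OF dXf] unfolding goodseq_def by blast
    have lopt: "length (opt Xf) = dg Xf" using opt_props[OF dXf] by simp
    have outs: "tmloc.outs dl lam phi [] s = enc_flips fs"
      unfolding fs_def F_def Xf_def dl_def lam_def phi_def
      using outs_eq[of k Xs K "[]" s] loc unfolding dl_def lam_def phi_def by simp
    have sk: "\<forall>a\<in>set s. a < k" using ss by auto
    show "\<exists>is. runs_within (tmloc.M k Xs dl lam phi) (enc_string s)
        ((6 * tmloc.B k Xs lam phi + 11) * length s ^ 2 + (6 * tmloc.B k Xs lam phi + 11)) (enc_flips is) \<and>
        (\<exists>u. flips is s = Some u \<and> length u = card (set s)) \<and>
        real (length is) \<le> (1 + \<epsilon>) * real (dg s)"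
    proof (rule exI[of _ fs], intro conjI)
    show "runs_within (tmloc.M k Xs dl lam phi) (enc_string s)
        ((6 * tmloc.B k Xs lam phi + 11) * length s ^ 2 + (6 * tmloc.B k Xs lam phi + 11)) (enc_flips fs)"
      using tmloc.tm_main[OF loc sk] unfolding outs .
    show "\<exists>u. flips fs s = Some u \<and> length u = card (set s)"
      using fl1 u sXf by (simp add: fs_def flips_append)
    show "real (length fs) \<le> (1 + \<epsilon>) * real (dg s)"
    proof (cases "length s \<le> K")
      case True
      then have "trun K [] s = ([], s)" using trun_small[of "[]" s K] by simp
      then have "length fs = dg s" unfolding fs_def F_def Xf_def using lopt Xf_def by simp
      moreover have "real (dg s) \<le> (1 + \<epsilon>) * real (dg s)"
        using e by (simp add: algebra_simps)
      ultimately show ?thesis by simp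
    next
      case False
      have ck: "card (set [] \<union> set s) \<le> k" using card_le_k[OF ss] by simp
      have cnt: "(K - k) * (length F + length Xf) + k * length Xf \<le> K * length s"
        using trun_count[where X="[]" and r=s and K=K and k=k] ck kK F_def Xf_def by simp
      have "dg Xf \<le> length Xf" using dg_le[OF dXf] .
      then have "m * length fs \<le> (K - k) * (length F + length Xf)"
        unfolding fs_def using lopt K_def by simp
      also have "\<dots> \<le> K * length s" using cnt by linarith
      finally have h1: "m * length fs \<le> (k + m) * length s" unfolding K_def .
      have h4: "m \<le> length s" using False K_def by simp
      have "length s \<le> dg s + card (set s)" using dg_ge[OF ds] .
      then have h5: "real (length s) - real k \<le> real (dg s)" using card_le_k[OF ss] by linarith
      show ?thesis using real_bound[OF e m0 h1 h2 h3 h4 h5] .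
    qed
    qed
  qed
qed

end
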